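(* Let $(V,E,c,p)$ be a PCSTP instance with $s:=|T_p|\ge 2$, let $H$ be a terminal-regions decomposition, and enumerate $T_p=\{t_1,\dots,t_s\}$ so that $r^{pc}_H(t_1)\le r^{pc}_H(t_2)\le\dots\le r^{pc}_H(t_s)$. Let $v_i\in V\setminus T_p$. If there is an optimal solution $S$ with $v_i\in V(S)$, then $$C(S)\ \ge\ \underline{d}(v_i,\bar v_{i,1})+\underline{d}(v_i,\bar v_{i,2})+\sum_{k=1}^{s-2} r^{pc}_H(t_k).$$
   Context: A PCSTP instance $(V,E,c,p)$: finite undirected connected graph $G=(V,E)$, $c:E\to\mathbb{Q}_{>0}$, $p:V\to\mathbb{Q}_{\ge0}$. For a tree $S\subseteq G$ (connected acyclic subgraph with at least one vertex), $C(S):=\sum_{e\in E(S)}c(e)+\sum_{v\in V\setminus V(S)}p(v)$; an optimal solution is a tree minimizing $C$. $T_p:=\{v\in V:p(v)>0\}$. $d(u,w)$ is the shortest-path distance between $u,w$ in $G$ w.r.t. $c$. $\underline{d}(u,w)$ is the shortest-path distance between $u$ and $w$ in the subgraph of $G$ induced by $V\setminus(T_p\setminus\{u,w\})$ ($+\infty$ if none). For $v_i\in V\setminus T_p$, $\bar v_{i,1},\bar v_{i,2},\dots$ denote the potential terminals ordered by nondecreasing $\underline{d}(v_i,\cdot)$ (ties broken arbitrarily). A terminal-regions decomposition is a partition $H=\{H_t: t\in T_p\}$ of $V$ with $H_t\cap T_p=\{t\}$ and the subgraph induced by each $H_t$ connected. For $t\in T_p$, $r^{pc}_H(t):=\min\{p(t),\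 \min\{d(t,v): v\notin H_t\}\}$. *)

theory Defs
  imports "HOL-Analysis.Analysis" "HOL-Library.Extended_Real"
begin

definition graph :: "'a set \<Rightarrow> 'a set set \<Rightarrow> bool" where
  "graph V E \<longleftrightarrow> finite V \<and> (\<forall>e\<in>E. \<exists>x y. x \<noteq> y \<and> e = {x, y} \<and> x \<in> V \<and> y \<in> V)"

definition walk_in :: "'a set \<Rightarrow> 'a set set \<Rightarrow> 'a list \<Rightarrow> bool" where
  "walk_in W F xs \<longleftrightarrow> xs \<noteq> [] \<and> set xs \<subseteq> W \<and>
     (\<forall>i < length xs - 1. {xs ! i, xs ! Suc i} \<in> F)"

definition walk_cost :: "('a set \<Rightarrow> real) \<Rightarrow> 'a list \<Rightarrow> real" where
  "walk_cost c xs = (\<Sum>i < length xs - 1. c {xs ! i, xs ! Suc i})"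

text \<open>Shortest-path distance between u and w in the subgraph of (V,E) induced by
  W \<inter> V; +\<infinity> if there is no such path.\<close>
definition dist_in :: "'a set \<Rightarrow> 'a set set \<Rightarrow> ('a set \<Rightarrow> real) \<Rightarrow> 'a set \<Rightarrow> 'a \<Rightarrow> 'a \<Rightarrow> ereal" where
  "dist_in V E c W u w =
     (INF xs \<in> {xs. walk_in (W \<inter> V) E xs \<and> hd xs = u \<and> last xs = w}. ereal (walk_cost c xs))"

definition connected_graph :: "'a set \<Rightarrow> 'a set set \<Rightarrow> bool" where
  "connected_graph V E \<longleftrightarrow> (\<forall>x\<in>V. \<forall>y\<in>V. \<exists>xs. walk_in V E xs \<and> hd xs = x \<and> last xs = y)"

definition has_cycle :: "'a set set \<Rightarrow> bool" where
  "has_cycle F \<longleftrightarrow> (\<exists>xs. length xs \<ge> 3 \<and> distinct xs \<and>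
       (\<forall>i < length xs - 1. {xs ! i, xs ! Suc i} \<in> F) \<and> {last xs, hd xs} \<in> F)"

definition is_tree_in :: "'a set \<Rightarrow> 'a set set \<Rightarrow> 'a set \<Rightarrow> 'a set set \<Rightarrow> bool" where
  "is_tree_in V E VS ES \<longleftrightarrow> VS \<noteq> {} \<and> VS \<subseteq> V \<and> ES \<subseteq> E \<and> (\<forall>e\<in>ES. e \<subseteq> VS) \<and>
     connected_graph VS ES \<and> \<not> has_cycle ES"

definition pc_cost :: "'a set \<Rightarrow> ('a set \<Rightarrow> real) \<Rightarrow> ('a \<Rightarrow> real) \<Rightarrow> 'a set \<Rightarrow> 'a set set \<Rightarrow> real" where
  "pc_cost V c p VS ES = (\<Sum>e\<in>ES. c e) + (\<Sum>v \<in> V - VS. p v)"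

definition optimal_pcstp :: "'a set \<Rightarrow> 'a set set \<Rightarrow> ('a set \<Rightarrow> real) \<Rightarrow> ('a \<Rightarrow> real) \<Rightarrow> 'a set \<Rightarrow> 'a set set \<Rightarrow> bool" where
  "optimal_pcstp V E c p VS ES \<longleftrightarrow> is_tree_in V E VS ES \<and>
     (\<forall>VS' ES'. is_tree_in V E VS' ES' \<longrightarrow> pc_cost V c p VS ES \<le> pc_cost V c p VS' ES')"

definition pcstp_instance :: "'a set \<Rightarrow> 'a set set \<Rightarrow> ('a set \<Rightarrow> real) \<Rightarrow> ('a \<Rightarrow> real) \<Rightarrow> bool" where
  "pcstp_instance V E c p \<longleftrightarrow> graph V E \<and> connected_graph V E \<and> V \<noteq> {} \<and>
     (\<forall>e\<in>E. c e \<in> \<rat> \<and> c e > 0) \<and> (\<forall>v\<in>V. p v \<in> \<rat> \<and> p v \<ge> 0)"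

definition Tp :: "'a set \<Rightarrow> ('a \<Rightarrow> real) \<Rightarrow> 'a set" where
  "Tp V p = {v \<in> V. p v > 0}"

definition dG :: "'a set \<Rightarrow> 'a set set \<Rightarrow> ('a set \<Rightarrow> real) \<Rightarrow> 'a \<Rightarrow> 'a \<Rightarrow> ereal" where
  "dG V E c u w = dist_in V E c V u w"

definition dlow :: "'a set \<Rightarrow> 'a set set \<Rightarrow> ('a set \<Rightarrow> real) \<Rightarrow> ('a \<Rightarrow> real) \<Rightarrow> 'a \<Rightarrow> 'a \<Rightarrow> ereal" where
  "dlow V E c p u w = dist_in V E c (V - (Tp V p - {u, w})) u w"

definition terminal_regions :: "'a set \<Rightarrow> 'a set set \<Rightarrow> ('a \<Rightarrow> real) \<Rightarrow> ('a \<Rightarrow> 'a set) \<Rightarrow> bool" where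
  "terminal_regions V E p H \<longleftrightarrow>
     (\<forall>t\<in>Tp V p. H t \<subseteq> V \<and> H t \<inter> Tp V p = {t} \<and>
         connected_graph (H t) {e\<in>E. e \<subseteq> H t}) \<and>
     (\<forall>t\<in>Tp V p. \<forall>t'\<in>Tp V p. t \<noteq> t' \<longrightarrow> H t \<inter> H t' = {}) \<and>
     (\<Union>t\<in>Tp V p. H t) = V"

definition rpc :: "'a set \<Rightarrow> 'a set set \<Rightarrow> ('a set \<Rightarrow> real) \<Rightarrow> ('a \<Rightarrow> real) \<Rightarrow> ('a \<Rightarrow> 'a set) \<Rightarrow> 'a \<Rightarrow> ereal" where
  "rpc V E c p H t = min (ereal (p t)) (INF v \<in> V - H t. dG V E c t v)"

end

theory Submission
  imports Defs
begin


lemma walk_in_Nil[simp]: "\<not> walk_in W F []"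
  by (simp add: walk_in_def)

lemma walk_in_single[simp]: "walk_in W F [x] \<longleftrightarrow> x \<in> W"
  by (simp add: walk_in_def)

lemma walk_in_Cons2[simp]:
  "walk_in W F (x # y # ys) \<longleftrightarrow> x \<in> W \<and> {x, y} \<in> F \<and> walk_in W F (y # ys)"
  unfolding walk_in_def
  apply (auto simp: less_Suc_eq_0_disj)
  done

lemma walk_cost_single[simp]: "walk_cost c [x] = 0"
  by (simp add: walk_cost_def)

lemma walk_cost_Cons2[simp]:
  "walk_cost c (x # y # ys) = c {x, y} + walk_cost c (y # ys)"
  unfolding walk_cost_def by (simp only: length_Cons diff_Suc_1 sum.lessThan_Suc_shift) simp

lemma walk_in_Cons:
  "xs \<noteq> [] \<Longrightarrow> walk_in W F (x # xs) \<longleftrightarrow> x \<in> W \<and> {x, hd xs} \<in> F \<and> walk_in W F xs"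
  by (cases xs) auto

lemma walk_cost_Cons:
  "xs \<noteq> [] \<Longrightarrow> walk_cost c (x # xs) = c {x, hd xs} + walk_cost c xs"
  by (cases xs) auto

lemma walk_in_snoc:
  "xs \<noteq> [] \<Longrightarrow> walk_in W F (xs @ [z]) \<longleftrightarrow> walk_in W F xs \<and> z \<in> W \<and> {last xs, z} \<in> F"
proof (induction xs)
  case Nil then show ?case by simp
next
  case (Cons a xs)
  then show ?case by (cases xs) (auto simp: walk_in_Cons)
qed

lemma walk_cost_snoc:
  "xs \<noteq> [] \<Longrightarrow> walk_cost c (xs @ [z]) = walk_cost c xs + c {last xs, z}"
proof (induction xs)
  case Nil then show ?case by simp
next
  case (Cons a xs)
  then show ?case by (cases xs) (auto simp: walk_cost_Cons)
qed

lemma walk_in_rev: "walk_in W F (rev xs) \<longleftrightarrow> walk_in W F xs"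
proof (induction xs)
  case Nil then show ?case by simp
next
  case (Cons a xs)
  show ?case
  proof (cases "xs = []")
    case True then show ?thesis by simp
  next
    case False
    have "walk_in W F (rev (a # xs)) \<longleftrightarrow> walk_in W F (rev xs) \<and> a \<in> W \<and> {hd xs, a} \<in> F"
      using walk_in_snoc[of "rev xs" W F a] False by (simp add: last_rev)
    then show ?thesis using Cons.IH False by (auto simp: walk_in_Cons insert_commute)
  qed
qed

lemma walk_cost_rev: "walk_cost c (rev xs) = walk_cost c xs"
proof (induction xs)
  case Nil then show ?case by (simp add: walk_cost_def)
next
  case (Cons a xs)
  show ?case
  proof (cases "xs = []")
    case True then show ?thesis by simp
  next
    case False
    have "walk_cost c (rev (a # xs)) = walk_cost c (rev xs) + c {hd xs, a}"
      using walk_cost_snoc[of "rev xs" c a] False by (simp add: last_rev)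
    then show ?thesis using Cons.IH False by (auto simp: walk_cost_Cons insert_commute)
  qed
qed

lemma walk_in_mono: "walk_in W F xs \<Longrightarrow> W \<subseteq> W' \<Longrightarrow> F \<subseteq> F' \<Longrightarrow> walk_in W' F' xs"
  unfolding walk_in_def by blast

lemma walk_cost_nonneg:
  assumes "walk_in W E xs" "\<forall>e\<in>E. c e > 0"
  shows "walk_cost c xs \<ge> 0"
  using assms unfolding walk_cost_def walk_in_def
  by (intro sum_nonneg) (smt (verit) lessThan_iff)

lemma graph_edge_other:
  assumes "graph V E" "e \<in> E" "x \<in> e"
  shows "\<exists>y. y \<noteq> x \<and> e = {x, y} \<and> x \<in> V \<and> y \<in> V"
  using assms unfolding graph_def by fastforce

lemma graph_edge_neq:
  assumes "graph V E" "{a, b} \<in> E"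
  shows "a \<noteq> b"
  using assms unfolding graph_def by (metis doubleton_eq_iff insert_absorb2 insert_iff singletonD)

lemma has_cycle_mono: "has_cycle F \<Longrightarrow> F \<subseteq> F' \<Longrightarrow> has_cycle F'"
  unfolding has_cycle_def by blast

lemma avoid_leaf:
  assumes "{e\<in>ES. l \<in> e} = {{l, y}}" "y \<noteq> l" "y \<in> VS"
  shows "walk_in VS ES xs \<Longrightarrow> last xs \<noteq> l \<Longrightarrow>
    \<exists>ys. walk_in (VS - {l}) (ES - {{l, y}}) ys \<and> hd ys = (if hd xs = l then y else hd xs) \<and> last ys = last xs"
proof (induction xs)
  case Nil then show ?case by simp
next
  case (Cons x xs)
  show ?case
  proof (cases "xs = []")
    case True
    then show ?thesis using Cons.prems by (intro exI[of _ "[x]"]) auto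
  next
    case False
    have w: "x \<in> VS" "{x, hd xs} \<in> ES" "walk_in VS ES xs"
      using Cons.prems(1) False by (auto simp: walk_in_Cons)
    have lst: "last xs \<noteq> l" using Cons.prems(2) False by simp
    obtain ys where ys: "walk_in (VS - {l}) (ES - {{l, y}}) ys"
      "hd ys = (if hd xs = l then y else hd xs)" "last ys = last xs"
      using Cons.IH[OF w(3) lst] by blast
    have edge: "e \<in> ES \<Longrightarrow> l \<in> e \<Longrightarrow> e = {l, y}" for e using assms(1) by blast
    show ?thesis
    proof (cases "x = l")
      case True
      then have "{l, hd xs} = {l, y}" using edge w(2) by simp
      then have "hd xs = y" using assms(2) by (metis doubleton_eq_iff)
      then show ?thesis using ys True False assms(2) by (intro exI[of _ ys]) auto
    next
      case xl: False
      show ?thesis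
      proof (cases "hd xs = l")
        case True
        then have "{x, l} = {l, y}" using edge w(2) by simp
        then have "x = y" using xl by (metis doubleton_eq_iff)
        then show ?thesis using ys True False xl by (intro exI[of _ ys]) auto
      next
        case hl: False
        have ne: "ys \<noteq> []" using ys(1) by auto
        have "{x, hd xs} \<noteq> {l, y}" using xl hl by (metis doubleton_eq_iff)
        then have "walk_in (VS - {l}) (ES - {{l, y}}) (x # ys)"
          using ys ne w xl hl by (auto simp: walk_in_Cons)
        then show ?thesis using ys ne xl hl False by (intro exI[of _ "x # ys"]) auto
      qed
    qed
  qed
qed

lemma tree_remove_leaf:
  assumes "is_tree_in V E VS ES" "l \<in> VS" "{e\<in>ES. l \<in> e} = {{l, y}}" "y \<noteq> l"
  shows "is_tree_in V E (VS - {l}) (ES - {{l, y}})"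
proof -
  have yV: "y \<in> VS" using assms(1,3) unfolding is_tree_in_def by blast
  have conn: "connected_graph VS ES" and nc: "\<not> has_cycle ES" using assms(1) unfolding is_tree_in_def by auto
  have "connected_graph (VS - {l}) (ES - {{l, y}})"
    unfolding connected_graph_def
  proof (intro ballI)
    fix a b assume ab: "a \<in> VS - {l}" "b \<in> VS - {l}"
    then obtain xs where xs: "walk_in VS ES xs" "hd xs = a" "last xs = b"
      using conn unfolding connected_graph_def by blast
    show "\<exists>xs. walk_in (VS - {l}) (ES - {{l, y}}) xs \<and> hd xs = a \<and> last xs = b"
      using avoid_leaf[OF assms(3,4) yV xs(1)] xs ab by auto
  qed
  moreover have "\<not> has_cycle (ES - {{l, y}})" using nc has_cycle_mono by blast
  moreover have "\<forall>e\<in>ES - {{l, y}}. e \<subseteq> VS - {l}"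
    using assms(1,3) unfolding is_tree_in_def by blast
  ultimately show ?thesis using assms(1) yV assms(4) unfolding is_tree_in_def by blast
qed



lemma walk_first_edge:
  assumes "walk_in W F ws" "hd ws = a" "last ws = b" "a \<noteq> b"
  shows "\<exists>w. {a, w} \<in> F \<and> w \<in> W \<and> a \<in> W"
proof -
  obtain ws' where ws: "ws = a # ws'" using assms by (cases ws) auto
  have "ws' \<noteq> []" using ws assms by auto
  then have "a \<in> W" "{a, hd ws'} \<in> F" "walk_in W F ws'" using assms(1) ws walk_in_Cons[OF \<open>ws' \<noteq> []\<close>, of W F a] by auto
  moreover have "hd ws' \<in> W" using \<open>walk_in W F ws'\<close> \<open>ws' \<noteq> []\<close> unfolding walk_in_def by auto
  ultimately show ?thesis by blast
qed

lemma exists_leaf: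
  assumes G: "graph V E" and T: "is_tree_in V E VS ES" and v: "v \<in> VS" and ne: "ES \<noteq> {}"
  shows "\<exists>l\<in>VS. l \<noteq> v \<and> (\<exists>y. y \<noteq> l \<and> {e\<in>ES. l \<in> e} = {{l, y}})"
proof -
  have "VS \<subseteq> V" using T unfolding is_tree_in_def by simp
  moreover have "finite V" using G unfolding graph_def by simp
  ultimately have VSfin: "finite VS" by (rule finite_subset)
  have ESE: "ES \<subseteq> E" and ESVS: "\<forall>e\<in>ES. e \<subseteq> VS" and conn: "connected_graph VS ES"
    and nc: "\<not> has_cycle ES" using T unfolding is_tree_in_def by auto
  define P where "P xs \<longleftrightarrow> walk_in VS ES xs \<and> hd xs = v \<and> distinct xs" for xs
  have P0: "P [v]" using v by (simp add: P_def)
  have bnd: "\<forall>xs. P xs \<longrightarrow> length xs < card VS + 1"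
  proof (intro allI impI)
    fix xs assume "P xs"
    then have "set xs \<subseteq> VS" "distinct xs" unfolding P_def walk_in_def by auto
    then have "card (set xs) \<le> card VS" using VSfin by (intro card_mono)
    then have "length xs \<le> card VS" using distinct_card[OF \<open>distinct xs\<close>] by simp
    then show "length xs < card VS + 1" by simp
  qed
  obtain xs where xs: "P xs" and xsmax: "\<And>ys. P ys \<Longrightarrow> length ys \<le> length xs"
    using Lattices_Big.ex_has_greatest_nat[OF P0 bnd] by blast
  have xw: "walk_in VS ES xs" "hd xs = v" "distinct xs" using xs P_def by auto
  have edgeneq: "{a, b} \<in> ES \<Longrightarrow> a \<noteq> b" for a b using graph_edge_neq[OF G] ESE by blast
  have len2: "length xs \<ge> 2"
  proof (rule ccontr)
    assume "\<not> length xs \<ge> 2"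
    then have "xs = [v]" using xw by (cases xs) (auto simp: Suc_le_eq)
    obtain e where e: "e \<in> ES" using ne by blast
    then obtain a b where ab: "a \<noteq> b" "e = {a, b}" using G e ESE unfolding graph_def by blast
    then have "a \<in> VS" "b \<in> VS" using ESVS e by auto
    then obtain w where w: "w \<in> VS" "w \<noteq> v" using ab by blast
    then obtain ws where "walk_in VS ES ws" "hd ws = v" "last ws = w"
      using conn v unfolding connected_graph_def by blast
    then obtain u where u: "{v, u} \<in> ES" "u \<in> VS" using walk_first_edge w by metis
    have "P [v, u]" using u v edgeneq[OF u(1)] by (simp add: P_def)
    then show False using xsmax[of "[v, u]"] \<open>xs = [v]\<close> by simp
  qed
  define n where "n = length xs"
  define z where "z = xs ! (n - 1)"
  define z' where "z' = xs ! (n - 2)"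
  have xne: "xs \<noteq> []" using len2 by auto
  have zlast: "z = last xs" using xne unfolding z_def n_def by (simp add: last_conv_nth)
  have zz': "{z', z} \<in> ES"
  proof -
    have "n - 2 < length xs - 1" using len2 n_def by simp
    then have "{xs!(n-2), xs!Suc(n-2)} \<in> ES" using xw(1) unfolding walk_in_def by blast
    moreover have "Suc (n-2) = n-1" using len2 n_def by simp
    ultimately show ?thesis unfolding z_def z'_def by simp
  qed
  have zv: "z \<noteq> v"
  proof
    assume "z = v"
    then have "xs ! (n - 1) = xs ! 0" using xw(2) xne unfolding z_def n_def by (simp add: hd_conv_nth)
    note eq = this
    have i1: "n - 1 < length xs" "0 < length xs" using len2 n_def by auto
    have "(xs ! (n-1) = xs ! 0) = (n - 1 = 0)" using nth_eq_iff_index_eq[OF xw(3) i1] .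
    then have "n - 1 = 0" using eq by blast
    then show False using len2 unfolding n_def by simp
  qed
  have zVS: "z \<in> VS" using xw(1) zlast len2 unfolding walk_in_def by auto
  have nz: "z' \<noteq> z" using edgeneq zz' by blast
  have only: "e = {z, z'}" if e: "e \<in> ES" "z \<in> e" for e
  proof -
    obtain w where w: "w \<noteq> z" "e = {z, w}" "w \<in> V" using graph_edge_other[OF G] e ESE by blast
    have wVS: "w \<in> VS" using ESVS e w by auto
    show ?thesis
    proof (cases "w \<in> set xs")
      case False
      have "P (xs @ [w])" using xw False wVS e w xne zlast
        by (auto simp: P_def walk_in_snoc)
      then show ?thesis using xsmax[of "xs @ [w]"] by simp
    next
      case True
      then obtain j where j: "j < n" "xs ! j = w" unfolding n_def by (metis in_set_conv_nth)
      have "j \<noteq> n - 1" using j w(1) z_def by auto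
      show ?thesis
      proof (cases "j = n - 2")
        case True then show ?thesis using j w z'_def by auto
      next
        case False
        then have jl: "j + 3 \<le> n" using \<open>j \<noteq> n - 1\<close> j by linarith
        define cy where "cy = drop j xs"
        have "has_cycle ES"
          unfolding has_cycle_def
        proof (intro exI[of _ cy] conjI)
          show "3 \<le> length cy" using jl unfolding cy_def n_def by simp
          show "distinct cy" using xw(3) unfolding cy_def by simp
          show "\<forall>i<length cy - 1. {cy ! i, cy ! Suc i} \<in> ES"
          proof (intro allI impI)
            fix i assume "i < length cy - 1"
            then have "j + i < length xs - 1" unfolding cy_def by simp
            then have "{xs ! (j + i), xs ! Suc (j + i)} \<in> ES" using xw(1) unfolding walk_in_def by blast
            then show "{cy ! i, cy ! Suc i} \<in> ES" unfolding cy_def using jl n_def \<open>j + i < length xs - 1\<close>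
              by simp
          qed
          have "last cy = z" using jl zlast unfolding cy_def n_def by simp
          moreover have "hd cy = w" using jl j unfolding cy_def n_def by (simp add: hd_drop_conv_nth)
          ultimately show "{last cy, hd cy} \<in> ES" using e w by simp
        qed
        then show ?thesis using nc by blast
      qed
    qed
  qed
  have "{e\<in>ES. z \<in> e} = {{z, z'}}"
  proof
    show "{e\<in>ES. z \<in> e} \<subseteq> {{z, z'}}" using only by blast
    have "{z, z'} \<in> ES" using zz' by (simp add: insert_commute)
    then show "{{z, z'}} \<subseteq> {e\<in>ES. z \<in> e}" by simp
  qed
  then show ?thesis using zVS zv nz by blast
qed



definition rr :: "'a set \<Rightarrow> 'a set set \<Rightarrow> ('a set \<Rightarrow> real) \<Rightarrow> ('a \<Rightarrow> real) \<Rightarrow> ('a \<Rightarrow> 'a set) \<Rightarrow> 'a \<Rightarrow> real" where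
  "rr V E c p H t = real_of_ereal (rpc V E c p H t)"

lemma set_hd_last_interior:
  "xs \<noteq> [] \<Longrightarrow> set xs \<subseteq> {hd xs, last xs} \<union> set (butlast (tl xs))"
proof (cases xs)
  case Nil then show ?thesis by simp
next
  case (Cons a ys)
  then show ?thesis
  proof (cases "ys = []")
    case True then show ?thesis using Cons by simp
  next
    case False
    have "set ys = set (butlast ys @ [last ys])" using append_butlast_last_id[OF False] by simp
    then have "set ys = set (butlast ys) \<union> {last ys}" by simp
    then show ?thesis using Cons False by auto
  qed
qed

context
  fixes V :: "'a set" and E c p H v
  assumes inst: "pcstp_instance V E c p"
    and HH: "terminal_regions V E p H"
    and vV: "v \<in> V - Tp V p"
begin

lemma G: "graph V E" using inst unfolding pcstp_instance_def by simp
lemma cpos: "e \<in> E \<Longrightarrow> c e > 0" using inst unfolding pcstp_instance_def by simp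
lemma pnn: "x \<in> V \<Longrightarrow> p x \<ge> 0" using inst unfolding pcstp_instance_def by simp
lemma Vfin: "finite V" using G unfolding graph_def by simp
lemma Tfin: "finite (Tp V p)" using Vfin unfolding Tp_def by simp
lemma TV: "Tp V p \<subseteq> V" unfolding Tp_def by auto
lemma Efin: "finite E"
proof -
  have "\<forall>e\<in>E. \<exists>x y. x \<noteq> y \<and> e = {x, y} \<and> x \<in> V \<and> y \<in> V" using G unfolding graph_def by (rule conjunct2)
  then have "E \<subseteq> Pow V" by auto
  then show ?thesis using Vfin finite_subset by blast
qed

lemma reg1: "t \<in> Tp V p \<Longrightarrow> H t \<inter> Tp V p = {t}"
  using HH[unfolded terminal_regions_def, THEN conjunct1, THEN bspec] by blast
lemma reg2: "t \<in> Tp V p \<Longrightarrow> t' \<in> Tp V p \<Longrightarrow> t \<noteq> t' \<Longrightarrow> H t \<inter> H t' = {}"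
  using HH[unfolded terminal_regions_def, THEN conjunct2, THEN conjunct1] by blast
lemma reg_self: "t \<in> Tp V p \<Longrightarrow> t \<in> H t"
  using reg1 by blast
lemma reg_term: "t \<in> Tp V p \<Longrightarrow> y \<in> Tp V p \<Longrightarrow> y \<in> H t \<Longrightarrow> y = t"
  using reg1 by blast
lemma reg_disj: "t \<in> Tp V p \<Longrightarrow> t' \<in> Tp V p \<Longrightarrow> x \<in> H t \<Longrightarrow> x \<in> H t' \<Longrightarrow> t = t'"
  using reg2 by blast

lemma choose_label:
  assumes "K \<subseteq> Tp V p" "K \<noteq> {}"
  shows "\<exists>\<kappa>\<in>K. \<forall>k\<in>K - {\<kappa>}. x \<notin> H k"
proof (cases "\<exists>k\<in>K. x \<in> H k")
  case True
  then obtain k where "k \<in> K" "x \<in> H k" by blast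
  then show ?thesis using assms reg_disj by blast
next
  case False then show ?thesis using assms by blast
qed

lemma dG_nonneg: "dG V E c a b \<ge> 0"
  unfolding dG_def dist_in_def
proof (rule INF_greatest)
  fix xs assume "xs \<in> {xs. walk_in (V \<inter> V) E xs \<and> hd xs = a \<and> last xs = b}"
  then have "walk_in (V \<inter> V) E xs" by simp
  moreover have "\<forall>e\<in>E. c e > 0" using cpos by blast
  ultimately have "walk_cost c xs \<ge> 0" by (rule walk_cost_nonneg)
  then show "0 \<le> ereal (walk_cost c xs)" by simp
qed

lemma rpc_fin: "t \<in> Tp V p \<Longrightarrow> ereal (rr V E c p H t) = rpc V E c p H t"
proof -
  assume t: "t \<in> Tp V p"
  have up: "rpc V E c p H t \<le> ereal (p t)" unfolding rpc_def by simp
  have "0 \<le> (INF w \<in> V - H t. dG V E c t w)" by (rule INF_greatest) (simp add: dG_nonneg)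
  moreover have "0 \<le> p t" using t TV pnn by blast
  ultimately have lo: "0 \<le> rpc V E c p H t" unfolding rpc_def by simp
  show ?thesis unfolding rr_def using up lo by (cases "rpc V E c p H t") auto
qed

lemma rr_le_p: "t \<in> Tp V p \<Longrightarrow> rr V E c p H t \<le> p t"
proof -
  assume t: "t \<in> Tp V p"
  have up: "rpc V E c p H t \<le> ereal (p t)" unfolding rpc_def by simp
  have "ereal (rr V E c p H t) \<le> ereal (p t)" by (subst rpc_fin[OF t]) (rule up)
  then show ?thesis by (simp only: ereal_less_eq(3))
qed

lemma charge:
  assumes t: "t \<in> Tp V p" and y: "y \<in> V" "y \<notin> H t"
    and w: "walk_in V E xs" "hd xs = y" "last xs = t"
  shows "rr V E c p H t \<le> walk_cost c xs"
proof -
  have ne: "xs \<noteq> []" using w by auto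
  have "rev xs \<in> {xs. walk_in (V \<inter> V) E xs \<and> hd xs = t \<and> last xs = y}"
    using w ne by (simp add: walk_in_rev hd_rev last_rev)
  then have "dG V E c t y \<le> ereal (walk_cost c (rev xs))"
    unfolding dG_def dist_in_def by (rule INF_lower)
  moreover have "(INF w \<in> V - H t. dG V E c t w) \<le> dG V E c t y"
    using y by (intro INF_lower) simp
  ultimately have "(INF w \<in> V - H t. dG V E c t w) \<le> ereal (walk_cost c xs)"
    by (simp add: walk_cost_rev)
  then have up: "rpc V E c p H t \<le> ereal (walk_cost c xs)"
    unfolding rpc_def by (rule min.coboundedI2)
  have "ereal (rr V E c p H t) \<le> ereal (walk_cost c xs)" by (subst rpc_fin[OF t]) (rule up)
  then show ?thesis by (simp only: ereal_less_eq(3))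
qed

lemma dlow_le:
  assumes w: "walk_in V E xs" "hd xs = v" "last xs = k" and ni: "set (butlast (tl xs)) \<inter> Tp V p = {}"
  shows "dlow V E c p v k \<le> ereal (walk_cost c xs)"
proof -
  have ne: "xs \<noteq> []" using w by auto
  have "set xs \<subseteq> {v, k} \<union> set (butlast (tl xs))" using set_hd_last_interior[OF ne] w by simp
  then have "set xs \<subseteq> (V - (Tp V p - {v, k})) \<inter> V" using ni w(1) unfolding walk_in_def by blast
  then have "walk_in ((V - (Tp V p - {v, k})) \<inter> V) E xs" using w(1) unfolding walk_in_def by blast
  then have "xs \<in> {xs. walk_in ((V - (Tp V p - {v, k})) \<inter> V) E xs \<and> hd xs = v \<and> last xs = k}"
    using w by simp
  then show ?thesis unfolding dlow_def dist_in_def by (rule INF_lower)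
qed

end


context
  fixes V :: "'a set" and E c p H v
  assumes inst: "pcstp_instance V E c p"
    and HH: "terminal_regions V E p H"
    and vV: "v \<in> V - Tp V p"
begin

lemma main:
  fixes VS :: "'a set" and ES :: "'a set set" and K :: "'a \<Rightarrow> 'a set" and b :: "'a \<Rightarrow> real"
  assumes "is_tree_in V E VS ES" "v \<in> VS"
   "\<forall>x\<in>VS. K x \<subseteq> Tp V p"
   "\<forall>x\<in>VS. \<forall>z\<in>VS. x \<noteq> z \<longrightarrow> K x \<inter> K z = {}"
   "\<forall>x\<in>VS \<inter> Tp V p. x \<in> K x"
   "\<forall>x\<in>VS. \<forall>k\<in>K x. \<exists>xs. walk_in V E xs \<and> hd xs = x \<and> last xs = k \<and> walk_cost c xs \<le> b k \<and> set (butlast (tl xs)) \<inter> Tp V p = {}"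
   "\<forall>x\<in>VS - {v}. card {e\<in>ES. x \<in> e} = 1 \<longrightarrow> K x \<noteq> {}"
   "2 \<le> card {e\<in>ES. v \<in> e} + card (K v)"
  shows "\<exists>\<mu>1 \<mu>2 d1 d2. \<mu>1 \<noteq> \<mu>2 \<and> \<mu>1 \<in> (\<Union>x\<in>VS. K x) \<and> \<mu>2 \<in> (\<Union>x\<in>VS. K x) \<and>
     dlow V E c p v \<mu>1 \<le> ereal d1 \<and> dlow V E c p v \<mu>2 \<le> ereal d2 \<and>
     d1 + d2 + (\<Sum>t\<in>(\<Union>x\<in>VS. K x) - {\<mu>1, \<mu>2}. rr V E c p H t) \<le> (\<Sum>e\<in>ES. c e) + (\<Sum>t\<in>(\<Union>x\<in>VS. K x). b t)"
  using assms
proof (induction "card ES" arbitrary: VS ES K b rule: less_induct)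
  case less
  note tr = less.prems(1) and vin = less.prems(2) and K1 = less.prems(3) and K2 = less.prems(4)
    and K3 = less.prems(5) and K4 = less.prems(6) and K5 = less.prems(7) and K6 = less.prems(8)
  have G: "graph V E" using G[OF inst HH vV] .
  have ESE: "ES \<subseteq> E" and VSV: "VS \<subseteq> V" and ESVS: "\<forall>e\<in>ES. e \<subseteq> VS" and conn: "connected_graph VS ES"
    using tr unfolding is_tree_in_def by auto
  have ESfin: "finite ES" by (rule finite_subset[OF ESE Efin[OF inst HH vV]])
  have Tfin: "finite (Tp V p)" using Tfin[OF inst HH vV] .
  have TV: "Tp V p \<subseteq> V" using TV[OF inst HH vV] .
  define TL where "TL = (\<Union>x\<in>VS. K x)"
  have TLT: "TL \<subseteq> Tp V p" using K1 unfolding TL_def by blast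
  have TLfin: "finite TL" by (rule finite_subset[OF TLT Tfin])
  have K4f: "\<exists>xs. walk_in V E xs \<and> hd xs = x \<and> last xs = k \<and> walk_cost c xs \<le> b k \<and> set (butlast (tl xs)) \<inter> Tp V p = {}"
    if "x \<in> VS" "k \<in> K x" for x k
    using bspec[OF bspec[OF K4 that(1)] that(2)] .
  have chg: "rr V E c p H k \<le> b k" if "x \<in> VS" "k \<in> K x" "x \<notin> H k" for x k
  proof -
    have ex: "\<exists>xs. walk_in V E xs \<and> hd xs = x \<and> last xs = k \<and> walk_cost c xs \<le> b k \<and> set (butlast (tl xs)) \<inter> Tp V p = {}"
      using bspec[OF bspec[OF K4 that(1)] that(2)] .
    obtain xs where xs: "walk_in V E xs" "hd xs = x" "last xs = k" "walk_cost c xs \<le> b k"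
      using ex by blast
    have kT: "k \<in> Tp V p" using K1 that(1,2) by blast
    have xV: "x \<in> V" using VSV that(1) by blast
    have "rr V E c p H k \<le> walk_cost c xs"
      using charge[OF inst HH vV kT xV that(3) xs(1-3)] .
    then show ?thesis using xs(4) by linarith
  qed
  show ?case
  proof (cases "ES = {}")
    case True
    have VSv: "VS = {v}"
    proof
      show "{v} \<subseteq> VS" using vin by simp
      show "VS \<subseteq> {v}"
      proof
        fix x assume x: "x \<in> VS"
        show "x \<in> {v}"
        proof (rule ccontr)
          assume "x \<notin> {v}"
          then have "v \<noteq> x" by simp
          obtain ws where "walk_in VS ES ws" "hd ws = v" "last ws = x"
            using conn vin x unfolding connected_graph_def by blast
          then obtain w where "{v, w} \<in> ES" using walk_first_edge \<open>v \<noteq> x\<close> by metis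
          then show False using True by simp
        qed
      qed
    qed
    have cK: "2 \<le> card (K v)" using K6 True by simp
    have KvT: "K v \<subseteq> Tp V p" using K1 vin by blast
    have Kvfin: "finite (K v)" by (rule finite_subset[OF KvT Tfin])
    have "K v \<noteq> {}" using cK by auto
    then obtain \<mu>1 where m1: "\<mu>1 \<in> K v" "\<forall>k\<in>K v - {\<mu>1}. v \<notin> H k"
      using choose_label[OF inst HH vV KvT] by blast
    have c1: "card (K v - {\<mu>1}) \<ge> 1" using cK m1(1) Kvfin by (simp add: card_Diff_singleton)
    have "K v - {\<mu>1} \<noteq> {}"
    proof
      assume "K v - {\<mu>1} = {}"
      then have "card (K v - {\<mu>1}) = 0" by (simp only: card.empty)
      then show False using c1 by linarith
    qed
    then obtain \<mu>2 where m2: "\<mu>2 \<in> K v" "\<mu>2 \<noteq> \<mu>1" by blast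
    have dl: "dlow V E c p v \<mu> \<le> ereal (b \<mu>)" if mu: "\<mu> \<in> K v" for \<mu>
    proof -
      obtain xs where xs: "walk_in V E xs" "hd xs = v" "last xs = \<mu>" "walk_cost c xs \<le> b \<mu>"
        "set (butlast (tl xs)) \<inter> Tp V p = {}"
        using K4f[OF vin mu] by blast
      have "dlow V E c p v \<mu> \<le> ereal (walk_cost c xs)"
        using dlow_le[OF inst HH vV xs(1-3,5)] .
      also have "\<dots> \<le> ereal (b \<mu>)" using xs(4) by simp
      finally show ?thesis .
    qed
    have TLv: "TL = K v" unfolding TL_def VSv by simp
    have s1: "(\<Sum>t\<in>K v - {\<mu>1, \<mu>2}. rr V E c p H t) \<le> (\<Sum>t\<in>K v - {\<mu>1, \<mu>2}. b t)"
    proof (rule sum_mono)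
      fix k assume "k \<in> K v - {\<mu>1, \<mu>2}"
      then show "rr V E c p H k \<le> b k" using chg[OF vin, of k] m1 by blast
    qed
    have s2: "(\<Sum>t\<in>K v. b t) = b \<mu>1 + (b \<mu>2 + (\<Sum>t\<in>K v - {\<mu>1, \<mu>2}. b t))"
    proof -
      have "(\<Sum>t\<in>K v. b t) = b \<mu>1 + (\<Sum>t\<in>K v - {\<mu>1}. b t)" using sum.remove[OF Kvfin m1(1)] .
      moreover have "(\<Sum>t\<in>K v - {\<mu>1}. b t) = b \<mu>2 + (\<Sum>t\<in>K v - {\<mu>1} - {\<mu>2}. b t)"
        using sum.remove[of "K v - {\<mu>1}" \<mu>2 b] Kvfin m2 by blast
      moreover have "K v - {\<mu>1} - {\<mu>2} = K v - {\<mu>1, \<mu>2}" by blast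
      ultimately show ?thesis by simp
    qed
    show ?thesis
      apply (rule exI[of _ \<mu>1], rule exI[of _ \<mu>2], rule exI[of _ "b \<mu>1"], rule exI[of _ "b \<mu>2"])
      using m1 m2 dl s1 s2 TLv True unfolding TL_def[symmetric] by auto
  next
    case False
    obtain l y where l: "l \<in> VS" "l \<noteq> v" "y \<noteq> l" "{e\<in>ES. l \<in> e} = {{l, y}}"
      using exists_leaf[OF G tr vin False] by blast
    define e where "e = {l, y}"
    have eES: "e \<in> ES" using l(4) e_def by blast
    have yVS: "y \<in> VS" using ESVS eES e_def by blast
    have lV: "l \<in> V" "y \<in> V" using VSV l(1) yVS by auto
    have eE: "{y, l} \<in> E" using eES ESE e_def by (simp add: insert_commute subset_iff)
    have "card {e\<in>ES. l \<in> e} = 1" using l(4) by simp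
    then have Klne: "K l \<noteq> {}" using K5 l(1,2) by blast
    have KlT: "K l \<subseteq> Tp V p" using K1 l(1) by blast
    obtain \<kappa> where ka: "\<kappa> \<in> K l" "\<forall>k\<in>K l - {\<kappa>}. l \<notin> H k"
      using choose_label[OF inst HH vV KlT Klne] by blast
    have kaT: "\<kappa> \<in> Tp V p" using ka KlT by blast
    have kal: "\<kappa> = l" if "l \<in> Tp V p"
    proof (rule ccontr)
      assume "\<kappa> \<noteq> l"
      moreover have "l \<in> K l" using K3 l(1) that by blast
      ultimately have "l \<notin> H l" using ka by blast
      then show False using reg_self[OF inst HH vV that] by blast
    qed
    define VS' where "VS' = VS - {l}"
    define ES' where "ES' = ES - {e}"
    define K' where "K' = K(y := K y \<union> {\<kappa>})"
    define b' where "b' = b(\<kappa> := b \<kappa> + c e)"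
    have tr': "is_tree_in V E VS' ES'" unfolding VS'_def ES'_def e_def
      using tree_remove_leaf[OF tr l(1) l(4) l(3)] .
    have card_lt: "card ES' < card ES" unfolding ES'_def by (rule card_Diff1_less[OF ESfin eES])
    have vin': "v \<in> VS'" using vin l(2) VS'_def by simp
    have yVS': "y \<in> VS'" using yVS l(3) VS'_def by simp
    have kaK: "\<kappa> \<notin> K x" if "x \<in> VS" "x \<noteq> l" for x using K2 ka(1) l(1) that by blast
    have K1': "\<forall>x\<in>VS'. K' x \<subseteq> Tp V p" using K1 kaT unfolding VS'_def K'_def by auto
    have K2': "\<forall>x\<in>VS'. \<forall>z\<in>VS'. x \<noteq> z \<longrightarrow> K' x \<inter> K' z = {}"
    proof (intro ballI impI)
      fix x z assume xz: "x \<in> VS'" "z \<in> VS'" "x \<noteq> z"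
      then have xz': "x \<in> VS" "z \<in> VS" "x \<noteq> l" "z \<noteq> l" unfolding VS'_def by auto
      show "K' x \<inter> K' z = {}"
        using K2 xz xz' kaK[OF xz'(1,3)] kaK[OF xz'(2,4)] unfolding K'_def by auto
    qed
    have K3': "\<forall>x\<in>VS' \<inter> Tp V p. x \<in> K' x" using K3 unfolding VS'_def K'_def by auto
    obtain xs where xs: "walk_in V E xs" "hd xs = l" "last xs = \<kappa>" "walk_cost c xs \<le> b \<kappa>"
      "set (butlast (tl xs)) \<inter> Tp V p = {}"
      using K4f[OF l(1) ka(1)] by blast
    have bka: "0 \<le> b \<kappa>"
      using walk_cost_nonneg[OF xs(1)] cpos[OF inst HH vV] xs(4) by force
    have nw: "\<exists>ws. walk_in V E ws \<and> hd ws = y \<and> last ws = \<kappa> \<and> walk_cost c ws \<le> b \<kappa> + c e \<and>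
       set (butlast (tl ws)) \<inter> Tp V p = {}"
    proof (cases "l \<in> Tp V p")
      case True
      then have "\<kappa> = l" using kal by blast
      then show ?thesis using lV eE bka e_def
        by (intro exI[of _ "[y, l]"]) (simp add: insert_commute)
    next
      case False
      have ne: "xs \<noteq> []" using xs(1) by auto
      obtain ys where xsy: "xs = l # ys" using ne xs(2) by (cases xs) auto
      have "ys \<noteq> []"
      proof
        assume "ys = []"
        then have "\<kappa> = l" using xsy xs(3) by simp
        then show False using kaT False by simp
      qed
      have w1: "walk_in V E (y # xs)" using walk_in_Cons[OF ne] xs(1,2) lV eE by simp
      have w2: "walk_cost c (y # xs) = c e + walk_cost c xs"
        using walk_cost_Cons[OF ne] xs(2) e_def by (simp add: insert_commute)
      have w3: "butlast (tl (y # xs)) = l # butlast (tl xs)" using xsy \<open>ys \<noteq> []\<close> by simp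
      show ?thesis
        apply (rule exI[of _ "y # xs"])
        using w1 w2 w3 xs ne False by auto
    qed
    have K4': "\<forall>x\<in>VS'. \<forall>k\<in>K' x. \<exists>xs. walk_in V E xs \<and> hd xs = x \<and> last xs = k \<and> walk_cost c xs \<le> b' k \<and> set (butlast (tl xs)) \<inter> Tp V p = {}"
    proof (intro ballI)
      fix x k assume x: "x \<in> VS'" and k: "k \<in> K' x"
      have x': "x \<in> VS" "x \<noteq> l" using x VS'_def by auto
      show "\<exists>xs. walk_in V E xs \<and> hd xs = x \<and> last xs = k \<and> walk_cost c xs \<le> b' k \<and> set (butlast (tl xs)) \<inter> Tp V p = {}"
      proof (cases "k = \<kappa>")
        case True
        then have "x = y" using k kaK[OF x'] unfolding K'_def by (cases "x = y") auto
        then show ?thesis using nw True unfolding b'_def by simp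
      next
        case False
        then have "k \<in> K x" using k unfolding K'_def by (cases "x = y") auto
        then show ?thesis using K4f[OF x'(1)] False unfolding b'_def by simp
      qed
    qed
    have edgeset: "{e'\<in>ES'. x \<in> e'} = {e'\<in>ES. x \<in> e'}" if "x \<noteq> l" "x \<noteq> y" for x
      using that unfolding ES'_def e_def by auto
    have K5': "\<forall>x\<in>VS' - {v}. card {e\<in>ES'. x \<in> e} = 1 \<longrightarrow> K' x \<noteq> {}"
    proof (intro ballI impI)
      fix x assume x: "x \<in> VS' - {v}" and c1: "card {e\<in>ES'. x \<in> e} = 1"
      show "K' x \<noteq> {}"
      proof (cases "x = y")
        case True then show ?thesis unfolding K'_def by simp
      next
        case False
        have "x \<noteq> l" using x VS'_def by auto
        then show ?thesis using K5 x c1 edgeset[OF \<open>x \<noteq> l\<close> False] False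
          unfolding K'_def VS'_def by auto
      qed
    qed
    have K6': "2 \<le> card {e\<in>ES'. v \<in> e} + card (K' v)"
    proof (cases "v = y")
      case True
      have fin: "finite {e\<in>ES. v \<in> e}" using ESfin by simp
      have ein: "e \<in> {e\<in>ES. v \<in> e}" using eES True e_def by simp
      have "{e'\<in>ES'. v \<in> e'} = {e'\<in>ES. v \<in> e'} - {e}" unfolding ES'_def by auto
      then have c1: "card {e'\<in>ES'. v \<in> e'} = card {e'\<in>ES. v \<in> e'} - 1"
        using card_Diff_singleton[OF ein] by simp
      have c0: "card {e'\<in>ES. v \<in> e'} \<ge> 1" using fin ein
        by (metis One_nat_def Suc_leI card_gt_0_iff empty_iff)
      have KvT: "K v \<subseteq> Tp V p" using K1 vin by blast
      have Kvfin: "finite (K v)" by (rule finite_subset[OF KvT Tfin])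
      have "\<kappa> \<notin> K v" using kaK[OF vin] l(2) by blast
      then have c2: "card (K' v) = card (K v) + 1" unfolding K'_def using True Kvfin by simp
      show ?thesis using K6 c1 c2 c0 by linarith
    next
      case False
      then show ?thesis using K6 edgeset[OF _ False] l(2) unfolding K'_def by simp
    qed
    obtain \<mu>1 \<mu>2 d1 d2 where IH: "\<mu>1 \<noteq> \<mu>2" "\<mu>1 \<in> (\<Union>x\<in>VS'. K' x)" "\<mu>2 \<in> (\<Union>x\<in>VS'. K' x)"
      "dlow V E c p v \<mu>1 \<le> ereal d1" "dlow V E c p v \<mu>2 \<le> ereal d2"
      "d1 + d2 + (\<Sum>t\<in>(\<Union>x\<in>VS'. K' x) - {\<mu>1, \<mu>2}. rr V E c p H t) \<le> (\<Sum>e\<in>ES'. c e) + (\<Sum>t\<in>(\<Union>x\<in>VS'. K' x). b' t)"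
      using less.hyps[OF card_lt tr' vin' K1' K2' K3' K4' K5' K6'] by blast
    define TL' where "TL' = (\<Union>x\<in>VS'. K' x)"
    define D where "D = K l - {\<kappa>}"
    define U where "U = (\<Union>x\<in>VS - {l}. K x)"
    have U1: "TL' = U \<union> {\<kappa>}"
    proof -
      have "TL' = (\<Union>x\<in>VS'. K x) \<union> {\<kappa>}" unfolding TL'_def K'_def using yVS' by auto
      then show ?thesis unfolding U_def VS'_def by simp
    qed
    have U2: "TL = U \<union> K l" unfolding TL_def U_def using l(1) by blast
    have U3: "U \<inter> K l = {}" unfolding U_def using K2 l(1) by blast
    have TLsplit: "TL = TL' \<union> D" "TL' \<inter> D = {}" using U1 U2 U3 ka(1) unfolding D_def by blast+
    have Dfin: "finite D" using TLfin TLsplit by auto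
    have TL'fin: "finite TL'" using TLfin TLsplit by auto
    have kaTL': "\<kappa> \<in> TL'" using U1 by simp
    have S1: "(\<Sum>e\<in>ES. c e) = c e + (\<Sum>e\<in>ES'. c e)"
      unfolding ES'_def using sum.remove[OF ESfin eES] .
    have S2: "(\<Sum>t\<in>TL. b t) = (\<Sum>t\<in>TL'. b t) + (\<Sum>t\<in>D. b t)"
      using TLsplit TL'fin Dfin by (simp add: sum.union_disjoint)
    have S3: "(\<Sum>t\<in>TL'. b' t) = (\<Sum>t\<in>TL'. b t) + c e"
    proof -
      have "(\<Sum>t\<in>TL'. b' t) = b' \<kappa> + (\<Sum>t\<in>TL' - {\<kappa>}. b' t)" using sum.remove[OF TL'fin kaTL'] .
      moreover have "(\<Sum>t\<in>TL'. b t) = b \<kappa> + (\<Sum>t\<in>TL' - {\<kappa>}. b t)" using sum.remove[OF TL'fin kaTL'] .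
      moreover have "(\<Sum>t\<in>TL' - {\<kappa>}. b' t) = (\<Sum>t\<in>TL' - {\<kappa>}. b t)"
        unfolding b'_def by (rule sum.cong) auto
      ultimately show ?thesis unfolding b'_def by simp
    qed
    have Mdisj: "D \<inter> {\<mu>1, \<mu>2} = {}" using IH(2,3) TLsplit(2) unfolding TL'_def by blast
    have S4: "(\<Sum>t\<in>TL - {\<mu>1, \<mu>2}. rr V E c p H t) = (\<Sum>t\<in>TL' - {\<mu>1, \<mu>2}. rr V E c p H t) + (\<Sum>t\<in>D. rr V E c p H t)"
    proof -
      have "TL - {\<mu>1, \<mu>2} = (TL' - {\<mu>1, \<mu>2}) \<union> D" using TLsplit Mdisj by blast
      moreover have "(TL' - {\<mu>1, \<mu>2}) \<inter> D = {}" using TLsplit by blast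
      ultimately show ?thesis using TL'fin Dfin by (simp add: sum.union_disjoint)
    qed
    have S5: "(\<Sum>t\<in>D. rr V E c p H t) \<le> (\<Sum>t\<in>D. b t)"
    proof (rule sum_mono)
      fix k assume "k \<in> D"
      then have "k \<in> K l" "l \<notin> H k" using ka unfolding D_def by auto
      then show "rr V E c p H k \<le> b k" using chg[OF l(1)] by blast
    qed
    have IH6: "d1 + d2 + (\<Sum>t\<in>TL' - {\<mu>1, \<mu>2}. rr V E c p H t) \<le> (\<Sum>e\<in>ES'. c e) + (\<Sum>t\<in>TL'. b' t)"
      using IH(6) unfolding TL'_def .
    have fin: "d1 + d2 + (\<Sum>t\<in>TL - {\<mu>1, \<mu>2}. rr V E c p H t) \<le> (\<Sum>e\<in>ES. c e) + (\<Sum>t\<in>TL. b t)"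
      using IH6 S1 S2 S3 S4 S5 by linarith
    have mu: "\<mu>1 \<in> TL" "\<mu>2 \<in> TL" using IH(2,3) TLsplit unfolding TL'_def by blast+
    show ?thesis
      apply (rule exI[of _ \<mu>1], rule exI[of _ \<mu>2], rule exI[of _ d1], rule exI[of _ d2])
      using IH(1,4,5) mu fin unfolding TL_def by blast
  qed
qed

end


lemma sum_first_le:
  fixes g :: "nat \<Rightarrow> real"
  assumes mono: "\<And>i j. 1 \<le> i \<Longrightarrow> i \<le> j \<Longrightarrow> j \<le> s \<Longrightarrow> g i \<le> g j"
    and J: "J \<subseteq> {1..s}" and cJ: "card J = m"
  shows "(\<Sum>k = 1..m. g k) \<le> (\<Sum>k\<in>J. g k)"
proof (cases "m = 0")
  case True
  have Jfin: "finite J" using J finite_subset by blast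
  then have "J = {}" using cJ True by simp
  then show ?thesis using True by simp
next
  case False
  have Jfin: "finite J" using J by (rule finite_subset) simp
  have ms: "m \<le> s" using card_mono[OF _ J] cJ by simp
  define A where "A = {1..m} - J"
  define B where "B = J - {1..m}"
  define C where "C = {1..m} \<inter> J"
  have e1: "(\<Sum>k = 1..m. g k) = (\<Sum>k\<in>C. g k) + (\<Sum>k\<in>A. g k)"
    unfolding A_def C_def by (rule sum.Int_Diff) simp
  have e2: "(\<Sum>k\<in>J. g k) = (\<Sum>k\<in>C. g k) + (\<Sum>k\<in>B. g k)"
    unfolding B_def C_def using sum.Int_Diff[OF Jfin, of g "{1..m}"] by (simp add: Int_commute)
  have cA: "card A = m - card C" unfolding A_def C_def
    using card_Diff_subset_Int[of "{1..m}" J] by simp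
  have cB: "card B = m - card C" unfolding B_def C_def
    using card_Diff_subset_Int[of J "{1..m}"] Jfin cJ by (simp add: Int_commute)
  have sA: "(\<Sum>k\<in>A. g k) \<le> of_nat (card A) * g m"
  proof (rule sum_bounded_above)
    fix i assume "i \<in> A"
    then show "g i \<le> g m" using mono[of i m] ms unfolding A_def by auto
  qed
  have sB: "of_nat (card B) * g m \<le> (\<Sum>k\<in>B. g k)"
  proof (rule sum_bounded_below)
    fix i assume "i \<in> B"
    then have "i \<in> {1..s}" "m < i" using J unfolding B_def by auto
    then show "g m \<le> g i" using mono[of m i] False by auto
  qed
  show ?thesis using e1 e2 cA cB sA sB by simp
qed


theorem proposition2:
  fixes V :: "'a set" and E :: "'a set set" and c :: "'a set \<Rightarrow> real" and p :: "'a \<Rightarrow> real"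
    and H :: "'a \<Rightarrow> 'a set" and tt :: "nat \<Rightarrow> 'a" and vbar :: "nat \<Rightarrow> 'a"
    and v :: 'a and VS :: "'a set" and ES :: "'a set set"
  assumes inst: "pcstp_instance V E c p"
    and s2: "card (Tp V p) \<ge> 2"
    and H: "terminal_regions V E p H"
    and tt_enum: "bij_betw tt {1..card (Tp V p)} (Tp V p)"
    and tt_sorted: "\<And>i j. 1 \<le> i \<Longrightarrow> i \<le> j \<Longrightarrow> j \<le> card (Tp V p) \<Longrightarrow> rpc V E c p H (tt i) \<le> rpc V E c p H (tt j)"
    and v: "v \<in> V - Tp V p"
    and vbar_enum: "bij_betw vbar {1..card (Tp V p)} (Tp V p)"
    and vbar_sorted: "\<And>i j. 1 \<le> i \<Longrightarrow> i \<le> j \<Longrightarrow> j \<le> card (Tp V p) \<Longrightarrow> dlow V E c p v (vbar i) \<le> dlow V E c p v (vbar j)"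
    and opt: "optimal_pcstp V E c p VS ES"
    and vS: "v \<in> VS"
  shows "ereal (pc_cost V c p VS ES) \<ge>
           dlow V E c p v (vbar 1) + dlow V E c p v (vbar 2) + (\<Sum>k = 1..card (Tp V p) - 2. rpc V E c p H (tt k))"
proof -
  define T where "T = Tp V p"
  define s where "s = card T"
  define r where "r = rr V E c p H"
  have G: "graph V E" using G[OF inst H v] .
  have Vfin: "finite V" using Vfin[OF inst H v] .
  have Tfin: "finite T" unfolding T_def using Tfin[OF inst H v] .
  have TV: "T \<subseteq> V" unfolding T_def using TV[OF inst H v] .
  have cposE: "\<And>e. e \<in> E \<Longrightarrow> c e > 0" using cpos[OF inst H v] .
  have pnnV: "\<And>x. x \<in> V \<Longrightarrow> p x \<ge> 0" using pnn[OF inst H v] .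
  have pv0: "p v = 0" using v pnnV unfolding Tp_def by force
  have tr: "is_tree_in V E VS ES" using opt unfolding optimal_pcstp_def by blast
  have optc: "\<And>VS' ES'. is_tree_in V E VS' ES' \<Longrightarrow> pc_cost V c p VS ES \<le> pc_cost V c p VS' ES'"
    using opt unfolding optimal_pcstp_def by blast
  have ESE: "ES \<subseteq> E" and VSV: "VS \<subseteq> V" and ESVS: "\<forall>e\<in>ES. e \<subseteq> VS" and conn: "connected_graph VS ES"
    using tr unfolding is_tree_in_def by auto
  have ESfin: "finite ES" by (rule finite_subset[OF ESE Efin[OF inst H v]])
  have VSfin: "finite VS" by (rule finite_subset[OF VSV Vfin])
  \<comment> \<open>removing a leaf without prize gives a cheaper tree\<close>
  have noleaf: "p l \<noteq> 0" if l: "l \<in> VS" "{e\<in>ES. l \<in> e} = {{l, y}}" "y \<noteq> l" for l y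
  proof
    assume pl: "p l = 0"
    have tr': "is_tree_in V E (VS - {l}) (ES - {{l, y}})" using tree_remove_leaf[OF tr l(1,2,3)] .
    have eES: "{l, y} \<in> ES" using l(2) by blast
    have ce: "c {l, y} > 0" using cposE eES ESE by blast
    have s1: "(\<Sum>e\<in>ES - {{l, y}}. c e) = (\<Sum>e\<in>ES. c e) - c {l, y}"
      using sum_diff1[OF ESfin, of c "{l, y}"] eES by simp
    have "V - (VS - {l}) = insert l (V - VS)" using l(1) VSV by blast
    then have s2: "(\<Sum>x\<in>V - (VS - {l}). p x) = (\<Sum>x\<in>V - VS. p x)"
      using Vfin l(1) pl by simp
    have "pc_cost V c p VS ES \<le> pc_cost V c p (VS - {l}) (ES - {{l, y}})" using optc[OF tr'] .
    then show False using s1 s2 ce unfolding pc_cost_def by simp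
  qed
  have VSne: "\<exists>x\<in>VS. x \<noteq> v"
  proof (rule ccontr)
    assume "\<not> (\<exists>x\<in>VS. x \<noteq> v)"
    then have VSv: "VS = {v}" using vS by blast
    have ES0: "ES = {}"
    proof (rule ccontr)
      assume "ES \<noteq> {}"
      then obtain e where e: "e \<in> ES" by blast
      then have eE: "e \<in> E" using ESE by blast
      obtain a b where ab: "a \<noteq> b" "e = {a, b}"
        using bspec[OF G[unfolded graph_def, THEN conjunct2] eE] by blast
      have "e \<subseteq> VS" using ESVS e by blast
      then have "a \<in> {v}" "b \<in> {v}" using ab(2) VSv by auto
      then show False using ab(1) by simp
    qed
    have "card T \<ge> 2" using s2 T_def by simp
    then have "T \<noteq> {}" by (intro notI) simp
    then obtain t where t: "t \<in> T" by blast
    have trt: "is_tree_in V E {t} {}"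
      unfolding is_tree_in_def connected_graph_def has_cycle_def
      using t TV by (auto intro!: exI[of _ "[t]"])
    have "pc_cost V c p VS ES \<le> pc_cost V c p {t} {}" using optc[OF trt] .
    moreover have "pc_cost V c p VS ES = (\<Sum>x\<in>V. p x) - p v"
      unfolding pc_cost_def VSv ES0 using sum_diff1[OF Vfin, of p v] v by simp
    moreover have "pc_cost V c p {t} {} = (\<Sum>x\<in>V. p x) - p t"
      unfolding pc_cost_def using sum_diff1[OF Vfin, of p t] t TV by auto
    moreover have "p t > 0" using t unfolding T_def Tp_def by simp
    ultimately show False using pv0 by simp
  qed
  have leaf_form: "\<exists>y. y \<noteq> x \<and> {e\<in>ES. x \<in> e} = {{x, y}}" if xa: "x \<in> VS" and x1: "card {e\<in>ES. x \<in> e} = 1" for x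
  proof -
    have "\<exists>e0. {e\<in>ES. x \<in> e} = {e0}" using card_1_singleton_iff[THEN iffD1] x1 by simp
    then obtain e0 where e0: "{e\<in>ES. x \<in> e} = {e0}" by (elim exE)
    then have e0ES: "e0 \<in> ES" and xe0: "x \<in> e0" by auto
    have e0E: "e0 \<in> E" using ESE e0ES by blast
    obtain y where "y \<noteq> x" "e0 = {x, y}" using graph_edge_other[OF G e0E xe0] by blast
    then show ?thesis using e0 by blast
  qed
  have degv: "2 \<le> card {e\<in>ES. v \<in> e}"
  proof -
    obtain x where x: "x \<in> VS" "x \<noteq> v" using VSne by blast
    obtain ws where "walk_in VS ES ws" "hd ws = v" "last ws = x"
      using conn vS x(1) unfolding connected_graph_def by blast
    then obtain w where "{v, w} \<in> ES" using walk_first_edge x(2) by metis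
    then have "{v, w} \<in> {e\<in>ES. v \<in> e}" by simp
    moreover have "finite {e\<in>ES. v \<in> e}" using ESfin by simp
    ultimately have c1: "card {e\<in>ES. v \<in> e} \<noteq> 0" by auto
    have "card {e\<in>ES. v \<in> e} \<noteq> 1"
    proof
      assume "card {e\<in>ES. v \<in> e} = 1"
      then obtain y where "y \<noteq> v" "{e\<in>ES. v \<in> e} = {{v, y}}" using leaf_form vS by blast
      then show False using noleaf[OF vS] pv0 by blast
    qed
    then show ?thesis using c1 by linarith
  qed
  define K0 where "K0 x = (if x \<in> Tp V p then {x} else {})" for x
  have K1: "\<forall>x\<in>VS. K0 x \<subseteq> Tp V p" unfolding K0_def by auto
  have K2: "\<forall>x\<in>VS. \<forall>z\<in>VS. x \<noteq> z \<longrightarrow> K0 x \<inter> K0 z = {}" unfolding K0_def by auto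
  have K3: "\<forall>x\<in>VS \<inter> Tp V p. x \<in> K0 x" unfolding K0_def by auto
  have K4: "\<forall>x\<in>VS. \<forall>k\<in>K0 x. \<exists>xs. walk_in V E xs \<and> hd xs = x \<and> last xs = k \<and> walk_cost c xs \<le> (\<lambda>_. 0) k \<and> set (butlast (tl xs)) \<inter> Tp V p = {}"
  proof (intro ballI)
    fix x k assume x: "x \<in> VS" and k: "k \<in> K0 x"
    then have "k = x" unfolding K0_def by (auto split: if_splits)
    then show "\<exists>xs. walk_in V E xs \<and> hd xs = x \<and> last xs = k \<and> walk_cost c xs \<le> (\<lambda>_. 0) k \<and> set (butlast (tl xs)) \<inter> Tp V p = {}"
      using x VSV by (intro exI[of _ "[x]"]) auto
  qed
  have K5: "\<forall>x\<in>VS - {v}. card {e\<in>ES. x \<in> e} = 1 \<longrightarrow> K0 x \<noteq> {}"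
  proof (intro ballI impI)
    fix x assume x: "x \<in> VS - {v}" and c1: "card {e\<in>ES. x \<in> e} = 1"
    then obtain y where "y \<noteq> x" "{e\<in>ES. x \<in> e} = {{x, y}}" using leaf_form by blast
    then have "p x \<noteq> 0" using noleaf x by blast
    moreover have "p x \<ge> 0" using pnnV x VSV by blast
    ultimately have "x \<in> Tp V p" using x VSV unfolding Tp_def by auto
    then show "K0 x \<noteq> {}" unfolding K0_def by simp
  qed
  have K6: "2 \<le> card {e\<in>ES. v \<in> e} + card (K0 v)" using degv by simp
  have TL0: "(\<Union>x\<in>VS. K0 x) = VS \<inter> T" unfolding K0_def T_def by (auto split: if_splits)
  obtain \<mu>1 \<mu>2 d1 d2 where M: "\<mu>1 \<noteq> \<mu>2" "\<mu>1 \<in> VS \<inter> T" "\<mu>2 \<in> VS \<inter> T"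
    "dlow V E c p v \<mu>1 \<le> ereal d1" "dlow V E c p v \<mu>2 \<le> ereal d2"
    "d1 + d2 + (\<Sum>t\<in>VS \<inter> T - {\<mu>1, \<mu>2}. r t) \<le> (\<Sum>e\<in>ES. c e) + (\<Sum>t\<in>VS \<inter> T. (\<lambda>_. 0::real) t)"
    using main[OF inst H v tr vS K1 K2 K3 K4 K5 K6] unfolding TL0 r_def by blast
  have M6: "d1 + d2 + (\<Sum>t\<in>VS \<inter> T - {\<mu>1, \<mu>2}. r t) \<le> (\<Sum>e\<in>ES. c e)" using M(6) by simp
  have rp: "r t \<le> p t" if "t \<in> T" for t using rr_le_p[OF inst H v] that unfolding r_def T_def by blast
  have out: "(\<Sum>t\<in>T - VS. r t) \<le> (\<Sum>x\<in>V - VS. p x)"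
  proof -
    have "(\<Sum>t\<in>T - VS. r t) \<le> (\<Sum>t\<in>T - VS. p t)" by (rule sum_mono) (use rp in auto)
    also have "\<dots> \<le> (\<Sum>x\<in>V - VS. p x)"
      by (rule sum_mono2) (use Vfin TV pnnV in auto)
    finally show ?thesis .
  qed
  have split: "T - {\<mu>1, \<mu>2} = (VS \<inter> T - {\<mu>1, \<mu>2}) \<union> (T - VS)" using M(2,3) by blast
  have tot: "d1 + d2 + (\<Sum>t\<in>T - {\<mu>1, \<mu>2}. r t) \<le> pc_cost V c p VS ES"
  proof -
    have "(\<Sum>t\<in>T - {\<mu>1, \<mu>2}. r t) = (\<Sum>t\<in>VS \<inter> T - {\<mu>1, \<mu>2}. r t) + (\<Sum>t\<in>T - VS. r t)"
      unfolding split by (rule sum.union_disjoint) (use Tfin in auto)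
    then show ?thesis using M6 out unfolding pc_cost_def by linarith
  qed
  have sT: "s \<ge> 2" using s2 unfolding s_def T_def .
  have dsum: "dlow V E c p v (vbar 1) + dlow V E c p v (vbar 2) \<le> ereal d1 + ereal d2"
  proof -
    have "\<mu>1 \<in> vbar ` {1..s}" "\<mu>2 \<in> vbar ` {1..s}"
      using M(2,3) vbar_enum unfolding bij_betw_def s_def T_def by auto
    then obtain i1 i2 where i: "i1 \<in> {1..s}" "i2 \<in> {1..s}" "vbar i1 = \<mu>1" "vbar i2 = \<mu>2" by blast
    have "i1 \<noteq> i2" using i M(1) by blast
    have dd: "dlow V E c p v (vbar 1) + dlow V E c p v (vbar 2) \<le> dlow V E c p v (vbar i1) + dlow V E c p v (vbar i2)"
    proof (cases "i1 < i2")
      case True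
      have "dlow V E c p v (vbar 1) \<le> dlow V E c p v (vbar i1)"
        using vbar_sorted[of 1 i1] i unfolding s_def T_def by auto
      moreover have "dlow V E c p v (vbar 2) \<le> dlow V E c p v (vbar i2)"
        using vbar_sorted[of 2 i2] i True unfolding s_def T_def by auto
      ultimately show ?thesis by (rule add_mono)
    next
      case False
      then have "i2 < i1" using \<open>i1 \<noteq> i2\<close> by linarith
      have "dlow V E c p v (vbar 1) \<le> dlow V E c p v (vbar i2)"
        using vbar_sorted[of 1 i2] i unfolding s_def T_def by auto
      moreover have "dlow V E c p v (vbar 2) \<le> dlow V E c p v (vbar i1)"
        using vbar_sorted[of 2 i1] i \<open>i2 < i1\<close> unfolding s_def T_def by auto
      ultimately have "dlow V E c p v (vbar 1) + dlow V E c p v (vbar 2) \<le> dlow V E c p v (vbar i2) + dlow V E c p v (vbar i1)"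
        by (rule add_mono)
      then show ?thesis by (simp add: add.commute)
    qed
    also have "\<dots> \<le> ereal d1 + ereal d2" unfolding i(3,4) by (rule add_mono[OF M(4) M(5)])
    finally show ?thesis .
  qed
  have ttT: "tt k \<in> T" if "k \<in> {1..s}" for k
    using tt_enum that unfolding bij_betw_def s_def T_def by auto
  have rsum: "(\<Sum>k = 1..s - 2. rpc V E c p H (tt k)) = ereal (\<Sum>k = 1..s - 2. r (tt k))"
  proof -
    have "(\<Sum>k = 1..s - 2. rpc V E c p H (tt k)) = (\<Sum>k = 1..s - 2. ereal (r (tt k)))"
    proof (rule sum.cong)
      fix k assume "k \<in> {1..s - 2}"
      then have "tt k \<in> T" using ttT by auto
      then show "rpc V E c p H (tt k) = ereal (r (tt k))"
        using rpc_fin[OF inst H v] unfolding r_def T_def by metis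
    qed simp
    then show ?thesis by simp
  qed
  have rmono: "r (tt i) \<le> r (tt j)" if "1 \<le> i" "i \<le> j" "j \<le> s" for i j
  proof -
    have "rpc V E c p H (tt i) \<le> rpc V E c p H (tt j)" using tt_sorted that unfolding s_def T_def by blast
    moreover have "rpc V E c p H (tt i) = ereal (r (tt i))" "rpc V E c p H (tt j) = ereal (r (tt j))"
      using rpc_fin[OF inst H v] ttT that unfolding r_def T_def by (metis atLeastAtMost_iff le_trans)+
    ultimately show ?thesis by simp
  qed
  define J where "J = {k\<in>{1..s}. tt k \<notin> {\<mu>1, \<mu>2}}"
  have injJ: "inj_on tt J" using tt_enum unfolding bij_betw_def J_def s_def T_def by (auto intro: inj_on_subset)
  have im: "tt ` {1..s} = T" using tt_enum unfolding bij_betw_def s_def T_def by simp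
  have imJ: "tt ` J = T - {\<mu>1, \<mu>2}"
  proof
    show "tt ` J \<subseteq> T - {\<mu>1, \<mu>2}" using im unfolding J_def by blast
    show "T - {\<mu>1, \<mu>2} \<subseteq> tt ` J"
    proof
      fix x assume x: "x \<in> T - {\<mu>1, \<mu>2}"
      then obtain k where k: "k \<in> {1..s}" "x = tt k" using im by blast
      then have "k \<in> J" using x unfolding J_def by simp
      then show "x \<in> tt ` J" using k by blast
    qed
  qed
  have cJ: "card J = s - 2"
  proof -
    have "card J = card (T - {\<mu>1, \<mu>2})" using card_image[OF injJ] imJ by simp
    also have "\<dots> = card T - card {\<mu>1, \<mu>2}" using M(2,3) Tfin by (subst card_Diff_subset) auto
    also have "\<dots> = s - 2" using M(1) unfolding s_def by simp
    finally show ?thesis .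
  qed
  have rle: "(\<Sum>k = 1..s - 2. r (tt k)) \<le> (\<Sum>t\<in>T - {\<mu>1, \<mu>2}. r t)"
  proof -
    have "(\<Sum>k = 1..s - 2. r (tt k)) \<le> (\<Sum>k\<in>J. r (tt k))"
    proof -
      have JS: "J \<subseteq> {1..s}" unfolding J_def by blast
      show ?thesis using sum_first_le[where g="\<lambda>k. r (tt k)", OF rmono JS cJ] by simp
    qed
    also have "\<dots> = (\<Sum>t\<in>T - {\<mu>1, \<mu>2}. r t)" using sum.reindex[OF injJ, of r] imJ by simp
    finally show ?thesis .
  qed
  have "dlow V E c p v (vbar 1) + dlow V E c p v (vbar 2) + (\<Sum>k = 1..card (Tp V p) - 2. rpc V E c p H (tt k))
      \<le> ereal d1 + ereal d2 + ereal (\<Sum>t\<in>T - {\<mu>1, \<mu>2}. r t)"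
  proof -
    have rs2: "(\<Sum>k = 1..card (Tp V p) - 2. rpc V E c p H (tt k)) \<le> ereal (\<Sum>t\<in>T - {\<mu>1, \<mu>2}. r t)"
      using rsum rle unfolding s_def T_def by simp
    show ?thesis by (rule add_mono[OF dsum rs2])
  qed
  also have "\<dots> = ereal (d1 + d2 + (\<Sum>t\<in>T - {\<mu>1, \<mu>2}. r t))" by simp
  also have "\<dots> \<le> ereal (pc_cost V c p VS ES)" using tot by simp
  finally show ?thesis .
qed


end
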